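(* Let $k$ be a field and let $X$ be a $\mathcal{T}$-space which is locally weakly quasi-compact. Let $F\in\mathrm{Mod}(k_\mathcal{T})$ and let $U\subseteq X$ be open. Then $$\Gamma(U;\rho^{-1}F)\simeq\varprojlim_{V\subset\subset U,\,V\in\mathcal{T}}\Gamma(V;F).$$
   Context: For open subsets $V\subseteq U$ of a topological space $X$, write $V\subset\subset U$ if for every covering $\{U_i\}_{i\in I}$ of $U$ by open sets there is a finite $J\subseteq I$ with $V\subseteq\bigcup_{i\in J}U_i$; $\mathrm{Op}^c(U)$ is the set of such $V$. $X$ is locally weakly quasi-compact if for all open $U,V$: (LWC1) every $x\in U$ has a fundamental system of neighborhoods in $\mathrm{Op}^c(U)$; (LWC2) for $U'\in\mathrm{Op}^c(U)$, $V'\in\mathrm{Op}^c(V)$ one has $U'\cap V'\in\mathrm{Op}^c(U\cap V)$; (LWC3) for every $U'\in\mathrm{Op}^c(U)$ there is $W\in\mathrm{Op}^c(U)$ with $U'\subset\subset W$. Let $\mathcal{T}$ be a family of open subsets of $X$. A $\mathcal{T}$-subset of $X$ is a finite Boolean combination of elements of $\mathcal{T}$; a $\mathcal{T}$-connected subset is a $\mathcal{T}$-subset which is not the disjoint union of two proper $\mathcal{T}$-subsets that are both open and closed in it. $X$ is a $\mathcal{T}$-space if (i) $\mathcal{T}$ is a basis of the topology of $X$ and $\emptyset\in\mathcal{T}$; (ii) $\mathcal{T}$ is closed under finite unions and finite intersections; (iii) every $U\in\mathcal{T}$ has finitely many $\mathcal{T}$-connected components. $X_\mathcal{T}$ is the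 site whose underlying category is $\mathcal{T}$ (morphisms are inclusions), a family $\{U_i\}\subset\mathcal{T}$ of subsets of $U\in\mathcal{T}$ being a covering of $U$ iff it admits a finite subfamily whose union is $U$. $\mathrm{Mod}(k_\mathcal{T})$ (resp. $\mathrm{Mod}(k_X)$) is the category of sheaves of $k$-vector spaces on $X_\mathcal{T}$ (resp. $X$). $\rho:X\to X_\mathcal{T}$ is the natural morphism of sites, $\rho_*F(U)=F(U)$ for $U\in\mathcal{T}$, and $\rho^{-1}:\mathrm{Mod}(k_\mathcal{T})\to\mathrm{Mod}(k_X)$ is the left adjoint of $\rho_*$. *)

theory Defs
  imports "HOL-Analysis.Analysis"
begin

definition relcomp :: "'a topology \<Rightarrow> 'a set \<Rightarrow> 'a set \<Rightarrow> bool" where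
  "relcomp X V U \<longleftrightarrow> openin X V \<and> openin X U \<and> V \<subseteq> U \<and>
     (\<forall>\<U>. (\<forall>W\<in>\<U>. openin X W) \<and> \<Union>\<U> = U \<longrightarrow>
        (\<exists>\<J>\<subseteq>\<U>. finite \<J> \<and> V \<subseteq> \<Union>\<J>))"

definition loc_weakly_qc :: "'a topology \<Rightarrow> bool" where
  "loc_weakly_qc X \<longleftrightarrow>
     (\<forall>U x. openin X U \<and> x \<in> U \<longrightarrow>
        (\<forall>N. openin X N \<and> x \<in> N \<longrightarrow> (\<exists>V. relcomp X V U \<and> x \<in> V \<and> V \<subseteq> N))) \<and>
     (\<forall>U V U' V'. relcomp X U' U \<and> relcomp X V' V \<longrightarrow> relcomp X (U' \<inter> V') (U \<inter> V)) \<and>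
     (\<forall>U U'. relcomp X U' U \<longrightarrow> (\<exists>W. relcomp X W U \<and> relcomp X U' W))"

inductive_set tsubsets :: "'a topology \<Rightarrow> 'a set set \<Rightarrow> 'a set set" for X T where
  base: "W \<in> T \<Longrightarrow> W \<in> tsubsets X T"
| compl: "A \<in> tsubsets X T \<Longrightarrow> topspace X - A \<in> tsubsets X T"
| union: "A \<in> tsubsets X T \<Longrightarrow> B \<in> tsubsets X T \<Longrightarrow> A \<union> B \<in> tsubsets X T"

definition tconnected :: "'a topology \<Rightarrow> 'a set set \<Rightarrow> 'a set \<Rightarrow> bool" where
  "tconnected X T S \<longleftrightarrow> S \<in> tsubsets X T \<and>
     \<not> (\<exists>A B. A \<in> tsubsets X T \<and> B \<in> tsubsets X T \<and> A \<subset> S \<and> B \<subset> S \<and>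
            A \<inter> B = {} \<and> A \<union> B = S \<and>
            openin (subtopology X S) A \<and> closedin (subtopology X S) A \<and>
            openin (subtopology X S) B \<and> closedin (subtopology X S) B)"

definition tcomponents :: "'a topology \<Rightarrow> 'a set set \<Rightarrow> 'a set \<Rightarrow> 'a set set" where
  "tcomponents X T U = {C. C \<subseteq> U \<and> tconnected X T C \<and>
     (\<forall>D. C \<subseteq> D \<and> D \<subseteq> U \<and> tconnected X T D \<longrightarrow> D = C)}"

definition tspace :: "'a topology \<Rightarrow> 'a set set \<Rightarrow> bool" where
  "tspace X T \<longleftrightarrow>
     (\<forall>W\<in>T. openin X W) \<and>
     (\<forall>U x. openin X U \<and> x \<in> U \<longrightarrow> (\<exists>W\<in>T. x \<in> W \<and> W \<subseteq> U)) \<and>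
     {} \<in> T \<and>
     (\<forall>A\<in>T. \<forall>B\<in>T. A \<union> B \<in> T \<and> A \<inter> B \<in> T) \<and>
     (\<forall>U\<in>T. finite (tcomponents X T U))"

text \<open>A presheaf F of k-vector spaces on T is given by the subspaces sec W of an
  ambient k-vector space 'v (W in T) and linear restriction maps res W W'.\<close>
definition tpresheaf :: "'a set set \<Rightarrow> ('k::field \<Rightarrow> 'v::ab_group_add \<Rightarrow> 'v)
     \<Rightarrow> ('a set \<Rightarrow> 'v set) \<Rightarrow> ('a set \<Rightarrow> 'a set \<Rightarrow> 'v \<Rightarrow> 'v) \<Rightarrow> bool" where
  "tpresheaf T sc sec res \<longleftrightarrow>
     (\<forall>W\<in>T. 0 \<in> sec W \<and> (\<forall>s\<in>sec W. \<forall>t\<in>sec W. s + t \<in> sec W) \<and>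
        (\<forall>c. \<forall>s\<in>sec W. sc c s \<in> sec W)) \<and>
     (\<forall>W\<in>T. \<forall>W'\<in>T. W' \<subseteq> W \<longrightarrow>
        (\<forall>s\<in>sec W. res W W' s \<in> sec W') \<and>
        (\<forall>s\<in>sec W. \<forall>t\<in>sec W. res W W' (s + t) = res W W' s + res W W' t) \<and>
        (\<forall>c. \<forall>s\<in>sec W. res W W' (sc c s) = sc c (res W W' s))) \<and>
     (\<forall>W\<in>T. \<forall>s\<in>sec W. res W W s = s) \<and>
     (\<forall>W\<in>T. \<forall>W'\<in>T. \<forall>W''\<in>T. W'' \<subseteq> W' \<and> W' \<subseteq> W \<longrightarrow>
        (\<forall>s\<in>sec W. res W' W'' (res W W' s) = res W W'' s))"

definition tcovering :: "'a set set \<Rightarrow> 'a set \<Rightarrow> 'a set set \<Rightarrow> bool" where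
  "tcovering T W \<U> \<longleftrightarrow> \<U> \<subseteq> T \<and> (\<forall>V\<in>\<U>. V \<subseteq> W) \<and>
     (\<exists>\<J>\<subseteq>\<U>. finite \<J> \<and> \<Union>\<J> = W)"

definition tsheaf :: "'a set set \<Rightarrow> ('k::field \<Rightarrow> 'v::ab_group_add \<Rightarrow> 'v)
     \<Rightarrow> ('a set \<Rightarrow> 'v set) \<Rightarrow> ('a set \<Rightarrow> 'a set \<Rightarrow> 'v \<Rightarrow> 'v) \<Rightarrow> bool" where
  "tsheaf T sc sec res \<longleftrightarrow> tpresheaf T sc sec res \<and>
     (\<forall>W\<in>T. \<forall>\<U>. tcovering T W \<U> \<longrightarrow>
        (\<forall>s\<in>sec W. \<forall>t\<in>sec W. (\<forall>V\<in>\<U>. res W V s = res W V t) \<longrightarrow> s = t) \<and>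
        (\<forall>f. (\<forall>V\<in>\<U>. f V \<in> sec V) \<and>
             (\<forall>V\<in>\<U>. \<forall>V'\<in>\<U>. res V (V \<inter> V') (f V) = res V' (V \<inter> V') (f V')) \<longrightarrow>
             (\<exists>s\<in>sec W. \<forall>V\<in>\<U>. res W V s = f V)))"

text \<open>Germ at x of the section t over W (W in T, x in W): the class of (W,t) in the
  stalk colim_{x in W' in T} F(W'), which is the stalk of rho^{-1} F at x.\<close>
definition germ :: "'a set set \<Rightarrow> ('a set \<Rightarrow> 'v set) \<Rightarrow> ('a set \<Rightarrow> 'a set \<Rightarrow> 'v \<Rightarrow> 'v)
     \<Rightarrow> 'a \<Rightarrow> 'a set \<Rightarrow> 'v \<Rightarrow> ('a set \<times> 'v) set" where
  "germ T sec res x W t = {(W', t'). W' \<in> T \<and> x \<in> W' \<and> t' \<in> sec W' \<and>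
     (\<exists>W''\<in>T. x \<in> W'' \<and> W'' \<subseteq> W \<inter> W' \<and> res W W'' t = res W' W'' t')}"

text \<open>Sections of rho^{-1} F (the sheafification of U \<mapsto> colim_{U \<subseteq> W \<in> T} F(W)) over an
  open U: germ-valued functions on U that are locally germs of sections of F.\<close>
definition inv_sections :: "'a set set \<Rightarrow> ('a set \<Rightarrow> 'v set) \<Rightarrow> ('a set \<Rightarrow> 'a set \<Rightarrow> 'v \<Rightarrow> 'v)
     \<Rightarrow> 'a set \<Rightarrow> ('a \<Rightarrow> ('a set \<times> 'v) set) set" where
  "inv_sections T sec res U = {s. (\<forall>x. x \<notin> U \<longrightarrow> s x = {}) \<and>
     (\<forall>x\<in>U. \<exists>W\<in>T. \<exists>t\<in>sec W. x \<in> W \<and> W \<subseteq> U \<and> (\<forall>y\<in>W. s y = germ T sec res y W t))}"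

definition germ_add :: "'a set set \<Rightarrow> ('a set \<Rightarrow> 'v::ab_group_add set) \<Rightarrow> ('a set \<Rightarrow> 'a set \<Rightarrow> 'v \<Rightarrow> 'v)
     \<Rightarrow> 'a \<Rightarrow> ('a set \<times> 'v) set \<Rightarrow> ('a set \<times> 'v) set \<Rightarrow> ('a set \<times> 'v) set" where
  "germ_add T sec res x g1 g2 = (SOME g. \<exists>W t1 t2. W \<in> T \<and> x \<in> W \<and> t1 \<in> sec W \<and> t2 \<in> sec W \<and>
      g1 = germ T sec res x W t1 \<and> g2 = germ T sec res x W t2 \<and> g = germ T sec res x W (t1 + t2))"

definition germ_scale :: "'a set set \<Rightarrow> ('k \<Rightarrow> 'v \<Rightarrow> 'v) \<Rightarrow> ('a set \<Rightarrow> 'v set)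
     \<Rightarrow> ('a set \<Rightarrow> 'a set \<Rightarrow> 'v \<Rightarrow> 'v) \<Rightarrow> 'a \<Rightarrow> 'k \<Rightarrow> ('a set \<times> 'v) set \<Rightarrow> ('a set \<times> 'v) set" where
  "germ_scale T sc sec res x c g = (SOME g'. \<exists>W t. W \<in> T \<and> x \<in> W \<and> t \<in> sec W \<and>
      g = germ T sec res x W t \<and> g' = germ T sec res x W (sc c t))"

definition inv_add :: "'a set set \<Rightarrow> ('a set \<Rightarrow> 'v::ab_group_add set) \<Rightarrow> ('a set \<Rightarrow> 'a set \<Rightarrow> 'v \<Rightarrow> 'v)
     \<Rightarrow> 'a set \<Rightarrow> ('a \<Rightarrow> ('a set \<times> 'v) set) \<Rightarrow> ('a \<Rightarrow> ('a set \<times> 'v) set) \<Rightarrow> ('a \<Rightarrow> ('a set \<times> 'v) set)" where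
  "inv_add T sec res U s1 s2 = (\<lambda>x. if x \<in> U then germ_add T sec res x (s1 x) (s2 x) else {})"

definition inv_scale :: "'a set set \<Rightarrow> ('k \<Rightarrow> 'v \<Rightarrow> 'v) \<Rightarrow> ('a set \<Rightarrow> 'v set)
     \<Rightarrow> ('a set \<Rightarrow> 'a set \<Rightarrow> 'v \<Rightarrow> 'v) \<Rightarrow> 'a set \<Rightarrow> 'k \<Rightarrow> ('a \<Rightarrow> ('a set \<times> 'v) set) \<Rightarrow> ('a \<Rightarrow> ('a set \<times> 'v) set)" where
  "inv_scale T sc sec res U c s = (\<lambda>x. if x \<in> U then germ_scale T sc sec res x c (s x) else {})"

text \<open>Compatible families (s_V) indexed by V \<in> T with V \<subset>\<subset> U (extended by 0 elsewhere);
  vector space operations are componentwise in 'v.\<close>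
definition proj_lim :: "'a topology \<Rightarrow> 'a set set \<Rightarrow> ('a set \<Rightarrow> 'v::zero set)
     \<Rightarrow> ('a set \<Rightarrow> 'a set \<Rightarrow> 'v \<Rightarrow> 'v) \<Rightarrow> 'a set \<Rightarrow> ('a set \<Rightarrow> 'v) set" where
  "proj_lim X T sec res U = {f.
     (\<forall>V. V \<in> T \<and> relcomp X V U \<longrightarrow> f V \<in> sec V) \<and>
     (\<forall>V. \<not> (V \<in> T \<and> relcomp X V U) \<longrightarrow> f V = 0) \<and>
     (\<forall>V V'. V \<in> T \<and> relcomp X V U \<and> V' \<in> T \<and> relcomp X V' U \<and> V' \<subseteq> V \<longrightarrow>
        res V V' (f V) = f V')}"

end

theory Submission
  imports Defs
begin



lemma relcomp_sub: "relcomp X V A \<Longrightarrow> openin X W \<Longrightarrow> W \<subseteq> V \<Longrightarrow> relcomp X W A"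
  unfolding relcomp_def by (metis order_trans)

lemma relcomp_subset: "relcomp X V A \<Longrightarrow> V \<subseteq> A"
  unfolding relcomp_def by blast

lemma relcomp_mono:
  assumes "relcomp X V W" "W \<subseteq> A" "openin X A" shows "relcomp X V A"
proof -
  have VW: "openin X V" "openin X W" "V \<subseteq> W" using assms(1) by (auto simp: relcomp_def)
  have *: "\<exists>\<J>\<subseteq>\<U>. finite \<J> \<and> V \<subseteq> \<Union>\<J>" if o: "\<forall>B\<in>\<U>. openin X B" and u: "\<Union>\<U> = A" for \<U>
  proof -
    let ?V = "(\<lambda>B. B \<inter> W) ` \<U>"
    have "\<forall>B\<in>?V. openin X B" using o VW by auto
    moreover have "\<Union>?V = W" using u assms(2) by auto
    ultimately obtain \<J> where J: "\<J> \<subseteq> ?V" "finite \<J>" "V \<subseteq> \<Union>\<J>"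
      using assms(1) unfolding relcomp_def by meson
    then obtain \<J>0 where J0: "\<J>0 \<subseteq> \<U>" "finite \<J>0" "\<J> = (\<lambda>B. B \<inter> W) ` \<J>0"
      by (meson finite_subset_image)
    then have "V \<subseteq> \<Union>\<J>0" using J by auto
    then show ?thesis using J0 by blast
  qed
  show ?thesis unfolding relcomp_def using VW assms(2,3) * by blast
qed

locale thm8 =
  fixes X :: "'a topology" and T :: "'a set set"
    and sc :: "'k::field \<Rightarrow> 'v::ab_group_add \<Rightarrow> 'v"
    and sec :: "'a set \<Rightarrow> 'v set" and res :: "'a set \<Rightarrow> 'a set \<Rightarrow> 'v \<Rightarrow> 'v"
    and U :: "'a set"
  assumes tsp: "tspace X T" and lw: "loc_weakly_qc X"
    and sh: "tsheaf T sc sec res" and Uo: "openin X U"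
begin

lemma T_open: "W \<in> T \<Longrightarrow> openin X W" using tsp by (auto simp: tspace_def)
lemma basis: "openin X A \<Longrightarrow> x \<in> A \<Longrightarrow> \<exists>W\<in>T. x \<in> W \<and> W \<subseteq> A"
  using tsp unfolding tspace_def by blast
lemma T_int: "A \<in> T \<Longrightarrow> B \<in> T \<Longrightarrow> A \<inter> B \<in> T" using tsp by (auto simp: tspace_def)
lemma lwc1: "openin X A \<Longrightarrow> x \<in> A \<Longrightarrow> \<exists>V. relcomp X V A \<and> x \<in> V"
  using lw unfolding loc_weakly_qc_def by blast
lemma lwc2: "relcomp X P W \<Longrightarrow> relcomp X Q W' \<Longrightarrow> relcomp X (P \<inter> Q) (W \<inter> W')"
  using lw unfolding loc_weakly_qc_def by blast
lemma lwc3: "relcomp X V A \<Longrightarrow> \<exists>W. relcomp X W A \<and> relcomp X V W"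
  using lw unfolding loc_weakly_qc_def by blast

lemma psh: "tpresheaf T sc sec res" using sh by (simp add: tsheaf_def)
lemma sec_zero: "W \<in> T \<Longrightarrow> 0 \<in> sec W" using psh by (simp add: tpresheaf_def)
lemma sec_add: "W \<in> T \<Longrightarrow> a \<in> sec W \<Longrightarrow> b \<in> sec W \<Longrightarrow> a + b \<in> sec W"
  using psh by (simp add: tpresheaf_def)
lemma sec_sc: "W \<in> T \<Longrightarrow> a \<in> sec W \<Longrightarrow> sc c a \<in> sec W"
  using psh by (simp add: tpresheaf_def)
lemma res_in: "W \<in> T \<Longrightarrow> W' \<in> T \<Longrightarrow> W' \<subseteq> W \<Longrightarrow> a \<in> sec W \<Longrightarrow> res W W' a \<in> sec W'"
  using psh by (simp add: tpresheaf_def)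
lemma res_add: "W \<in> T \<Longrightarrow> W' \<in> T \<Longrightarrow> W' \<subseteq> W \<Longrightarrow> a \<in> sec W \<Longrightarrow> b \<in> sec W \<Longrightarrow>
    res W W' (a + b) = res W W' a + res W W' b"
  using psh by (simp add: tpresheaf_def)
lemma res_sc: "W \<in> T \<Longrightarrow> W' \<in> T \<Longrightarrow> W' \<subseteq> W \<Longrightarrow> a \<in> sec W \<Longrightarrow>
    res W W' (sc c a) = sc c (res W W' a)"
  using psh by (simp add: tpresheaf_def)
lemma res_id: "W \<in> T \<Longrightarrow> a \<in> sec W \<Longrightarrow> res W W a = a"
  using psh by (simp add: tpresheaf_def)
lemma res_trans: "W \<in> T \<Longrightarrow> W' \<in> T \<Longrightarrow> W'' \<in> T \<Longrightarrow> W'' \<subseteq> W' \<Longrightarrow> W' \<subseteq> W \<Longrightarrow> a \<in> sec W \<Longrightarrow>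
    res W' W'' (res W W' a) = res W W'' a"
  using psh unfolding tpresheaf_def by blast

lemma sep:
  assumes "W \<in> T" "J \<subseteq> T" "finite J" "\<Union>J = W" "a \<in> sec W" "b \<in> sec W"
    "\<And>D. D \<in> J \<Longrightarrow> res W D a = res W D b"
  shows "a = b"
proof -
  have "tcovering T W J" unfolding tcovering_def using assms by blast
  then show ?thesis using sh assms unfolding tsheaf_def by blast
qed

lemma glue:
  assumes "W \<in> T" "J \<subseteq> T" "finite J" "\<Union>J = W" "\<And>D. D \<in> J \<Longrightarrow> f D \<in> sec D"
    "\<And>D D'. D \<in> J \<Longrightarrow> D' \<in> J \<Longrightarrow> res D (D \<inter> D') (f D) = res D' (D \<inter> D') (f D')"
  shows "\<exists>t\<in>sec W. \<forall>D\<in>J. res W D t = f D"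
proof -
  have "tcovering T W J" unfolding tcovering_def using assms by blast
  then show ?thesis using sh assms unfolding tsheaf_def by blast
qed

end



context thm8 begin

abbreviation "gm \<equiv> germ T sec res"

lemma germ_self: "W \<in> T \<Longrightarrow> y \<in> W \<Longrightarrow> t \<in> sec W \<Longrightarrow> (W, t) \<in> gm y W t"
  unfolding germ_def using res_id by auto

lemma germ_res:
  assumes a: "W \<in> T" "W0 \<in> T" "W0 \<subseteq> W" "y \<in> W0" "t \<in> sec W"
  shows "gm y W t = gm y W0 (res W W0 t)"
proof (rule set_eqI)
  fix p :: "'a set \<times> 'v"
  obtain W' t' where p: "p = (W', t')" by (cases p)
  show "p \<in> gm y W t \<longleftrightarrow> p \<in> gm y W0 (res W W0 t)"
  proof
    assume "p \<in> gm y W t"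
    then obtain D where h: "W' \<in> T" "y \<in> W'" "t' \<in> sec W'" "D \<in> T" "y \<in> D" "D \<subseteq> W \<inter> W'"
        "res W D t = res W' D t'" by (auto simp: germ_def p)
    let ?D = "D \<inter> W0"
    have DT: "?D \<in> T" using T_int h a by auto
    have "res W0 ?D (res W W0 t) = res W ?D t" using res_trans[of W W0 ?D t] a DT by auto
    also have "\<dots> = res D ?D (res W D t)" using res_trans[of W D ?D t] a DT h by auto
    also have "\<dots> = res D ?D (res W' D t')" using h by simp
    also have "\<dots> = res W' ?D t'" using res_trans[of W' D ?D t'] DT h by auto
    finally have "res W0 ?D (res W W0 t) = res W' ?D t'" .
    then show "p \<in> gm y W0 (res W W0 t)" unfolding germ_def p using h a DT by auto
  next
    assume "p \<in> gm y W0 (res W W0 t)"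
    then obtain D where h: "W' \<in> T" "y \<in> W'" "t' \<in> sec W'" "D \<in> T" "y \<in> D" "D \<subseteq> W0 \<inter> W'"
        "res W0 D (res W W0 t) = res W' D t'" by (auto simp: germ_def p)
    have "res W D t = res W0 D (res W W0 t)" using res_trans[of W W0 D t] a h by auto
    then have "res W D t = res W' D t'" using h by simp
    then show "p \<in> gm y W t" unfolding germ_def p using h a by auto
  qed
qed

lemma germ_eq_D:
  assumes "W \<in> T" "W' \<in> T" "y \<in> W" "y \<in> W'" "a \<in> sec W" "b \<in> sec W'" "gm y W a = gm y W' b"
  shows "\<exists>D\<in>T. y \<in> D \<and> D \<subseteq> W \<inter> W' \<and> res W D a = res W' D b"
proof -
  have "(W', b) \<in> gm y W a" using germ_self assms by simp
  then show ?thesis unfolding germ_def by auto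
qed

lemma germ_eq_I:
  assumes "W \<in> T" "W' \<in> T" "D \<in> T" "y \<in> D" "D \<subseteq> W \<inter> W'" "a \<in> sec W" "b \<in> sec W'"
    "res W D a = res W' D b"
  shows "gm y W a = gm y W' b"
  using germ_res[of W D y a] germ_res[of W' D y b] assms by auto

definition good where
  "good s P W c \<longleftrightarrow> P \<in> T \<and> W \<in> T \<and> relcomp X P W \<and> W \<subseteq> U \<and> c \<in> sec W \<and>
     (\<forall>y\<in>W. s y = gm y W c)"

abbreviation "IS \<equiv> inv_sections T sec res U"

lemma good_ex:
  assumes "s \<in> IS" "x \<in> U" shows "\<exists>P W c. good s P W c \<and> x \<in> P"
proof -
  have "\<exists>W\<in>T. \<exists>t\<in>sec W. x \<in> W \<and> W \<subseteq> U \<and> (\<forall>y\<in>W. s y = gm y W t)"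
    using assms unfolding inv_sections_def by simp
  then obtain W t where h: "W \<in> T" "t \<in> sec W" "x \<in> W" "W \<subseteq> U" "\<forall>y\<in>W. s y = gm y W t"
    by blast
  obtain V where V: "relcomp X V W" "x \<in> V" using lwc1[OF T_open[OF h(1)] h(3)] by blast
  have "openin X V" using V(1) unfolding relcomp_def by simp
  then obtain P where P: "P \<in> T" "x \<in> P" "P \<subseteq> V" using basis[of V x] V(2) by blast
  have "relcomp X P W" using relcomp_sub[OF V(1) T_open[OF P(1)] P(3)] .
  then have "good s P W t" unfolding good_def using h P by simp
  then show ?thesis using P by blast
qed

lemma good_IS:
  assumes "\<forall>x. x \<notin> U \<longrightarrow> s x = {}" "\<forall>x\<in>U. \<exists>P W c. good s P W c \<and> x \<in> P"
  shows "s \<in> IS"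
proof -
  have "\<exists>W\<in>T. \<exists>t\<in>sec W. x \<in> W \<and> W \<subseteq> U \<and> (\<forall>y\<in>W. s y = gm y W t)" if "x \<in> U" for x
  proof -
    obtain P W c where "good s P W c" "x \<in> P" using assms(2) \<open>x \<in> U\<close> by blast
    then have "x \<in> W" "W \<in> T" "c \<in> sec W" "W \<subseteq> U" "\<forall>y\<in>W. s y = gm y W c"
      unfolding good_def using relcomp_subset by blast+
    then show ?thesis by blast
  qed
  then show ?thesis unfolding inv_sections_def using assms(1) by simp
qed

lemma agree:
  assumes g1: "good s P W c" and g2: "good s Q W' c'" and Z: "Z \<in> T" "Z \<subseteq> P \<inter> Q"
  shows "res W Z c = res W' Z c'"
proof -
  from g1 have P: "P\<in>T" "W\<in>T" "relcomp X P W" "W \<subseteq> U" "c \<in> sec W" "\<forall>y\<in>W. s y = gm y W c"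
    by (auto simp: good_def)
  from g2 have Q: "Q\<in>T" "W'\<in>T" "relcomp X Q W'" "W' \<subseteq> U" "c' \<in> sec W'" "\<forall>y\<in>W'. s y = gm y W' c'"
    by (auto simp: good_def)
  have rc: "relcomp X (P \<inter> Q) (W \<inter> W')" using lwc2 P(3) Q(3) by blast
  define \<D> where "\<D> = {D. D \<in> T \<and> D \<subseteq> W \<inter> W' \<and> res W D c = res W' D c'}"
  have "\<Union>\<D> = W \<inter> W'"
  proof
    show "\<Union>\<D> \<subseteq> W \<inter> W'" by (auto simp: \<D>_def)
    show "W \<inter> W' \<subseteq> \<Union>\<D>"
    proof
      fix y assume y: "y \<in> W \<inter> W'"
      have "gm y W c = gm y W' c'" using P(6) Q(6) y by auto
      then obtain D where "D\<in>T" "y\<in>D" "D \<subseteq> W\<inter>W'" "res W D c = res W' D c'"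
        using germ_eq_D[of W W' y c c'] P Q y by auto
      then show "y \<in> \<Union>\<D>" by (auto simp: \<D>_def)
    qed
  qed
  moreover have "\<forall>D\<in>\<D>. openin X D" using T_open by (auto simp: \<D>_def)
  ultimately obtain \<J> where J: "\<J> \<subseteq> \<D>" "finite \<J>" "P \<inter> Q \<subseteq> \<Union>\<J>"
    using rc unfolding relcomp_def by meson
  have ZW: "Z \<subseteq> W" "Z \<subseteq> W'" using Z P(3) Q(3) by (auto dest!: relcomp_subset)
  let ?J = "(\<lambda>D. Z \<inter> D) ` \<J>"
  show ?thesis
  proof (rule sep[of Z ?J])
    show "Z \<in> T" using Z by simp
    show "?J \<subseteq> T" using J T_int Z by (auto simp: \<D>_def)
    show "finite ?J" using J by simp
    show "\<Union>?J = Z" using J Z by auto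
    show "res W Z c \<in> sec Z" using res_in P ZW Z by auto
    show "res W' Z c' \<in> sec Z" using res_in Q ZW Z by auto
    fix E assume "E \<in> ?J"
    then obtain D where D: "D \<in> \<J>" "E = Z \<inter> D" by blast
    then have D2: "D \<in> T" "D \<subseteq> W \<inter> W'" "res W D c = res W' D c'" using J by (auto simp: \<D>_def)
    have ET: "E \<in> T" using D D2 T_int Z by auto
    have "res Z E (res W Z c) = res W E c" using res_trans[of W Z E c] P ZW Z ET D by auto
    also have "\<dots> = res D E (res W D c)" using res_trans[of W D E c] P D D2 ET by auto
    also have "\<dots> = res D E (res W' D c')" using D2 by simp
    also have "\<dots> = res W' E c'" using res_trans[of W' D E c'] Q D D2 ET by auto
    also have "\<dots> = res Z E (res W' Z c')" using res_trans[of W' Z E c'] Q ZW Z ET D by auto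
    finally show "res Z E (res W Z c) = res Z E (res W' Z c')" .
  qed
qed

lemma cover:
  assumes "s \<in> IS" "relcomp X V U"
  shows "\<exists>R Wf cf. finite R \<and> (\<forall>P\<in>R. good s P (Wf P) (cf P)) \<and> V \<subseteq> \<Union>R"
proof -
  define \<P> where "\<P> = {P. \<exists>W c. good s P W c}"
  have "\<Union>\<P> = U"
  proof
    show "\<Union>\<P> \<subseteq> U" by (auto simp: \<P>_def good_def dest!: relcomp_subset)
    show "U \<subseteq> \<Union>\<P>" using good_ex[OF assms(1)] by (auto simp: \<P>_def)
  qed
  moreover have "\<forall>P\<in>\<P>. openin X P" using T_open by (auto simp: \<P>_def good_def)
  moreover have rc: "\<forall>\<U>. (\<forall>W\<in>\<U>. openin X W) \<and> \<Union>\<U> = U \<longrightarrow> (\<exists>\<J>\<subseteq>\<U>. finite \<J> \<and> V \<subseteq> \<Union>\<J>)"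
    using assms(2) unfolding relcomp_def by blast
  ultimately have "\<exists>R\<subseteq>\<P>. finite R \<and> V \<subseteq> \<Union>R" by simp
  then obtain R where R: "R \<subseteq> \<P>" "finite R" "V \<subseteq> \<Union>R"
    by blast
  define Wf where "Wf P = (SOME W. \<exists>c. good s P W c)" for P
  define cf where "cf P = (SOME c. good s P (Wf P) c)" for P
  have "\<forall>P\<in>R. good s P (Wf P) (cf P)"
  proof
    fix P assume "P \<in> R"
    then have "\<exists>W c. good s P W c" using R by (auto simp: \<P>_def)
    then have "\<exists>c. good s P (Wf P) c" unfolding Wf_def by (rule someI_ex)
    then show "good s P (Wf P) (cf P)" unfolding cf_def by (rule someI_ex)
  qed
  then show ?thesis using R by blast
qed

end



context thm8 begin

definition Compat where
  "Compat s V t \<longleftrightarrow> t \<in> sec V \<and>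
     (\<forall>P W c. good s P W c \<longrightarrow> (\<forall>Z\<in>T. Z \<subseteq> V \<inter> P \<longrightarrow> res V Z t = res W Z c))"

lemma compat_D: "Compat s V t \<Longrightarrow> good s P W c \<Longrightarrow> Z \<in> T \<Longrightarrow> Z \<subseteq> V \<inter> P \<Longrightarrow> res V Z t = res W Z c"
  by (simp add: Compat_def)

lemma compat_sec: "Compat s V t \<Longrightarrow> t \<in> sec V"
  by (simp add: Compat_def)

lemma good_D: "good s P W c \<Longrightarrow> P \<in> T \<and> W \<in> T \<and> P \<subseteq> W \<and> W \<subseteq> U \<and> c \<in> sec W \<and> relcomp X P W"
  unfolding good_def using relcomp_subset by blast

lemma good_germ: "good s P W c \<Longrightarrow> y \<in> W \<Longrightarrow> s y = gm y W c"
  unfolding good_def by blast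

lemma compat_intro:
  fixes I :: "'i set" and Pf :: "'i \<Rightarrow> 'a set"
  assumes V: "V \<in> T" and fin: "finite I" and g: "\<forall>i\<in>I. good s (Pf i) (Wf i) (cf i)"
    and cov: "V \<subseteq> (\<Union>i\<in>I. Pf i)" and t: "t \<in> sec V"
    and ag: "\<forall>i\<in>I. res V (V \<inter> Pf i) t = res (Wf i) (V \<inter> Pf i) (cf i)"
  shows "Compat s V t"
  unfolding Compat_def
proof (intro conjI allI impI ballI)
  show "t \<in> sec V" by (rule t)
  fix P W c Z assume gP: "good s P W c" and Z: "Z \<in> T" "Z \<subseteq> V \<inter> P"
  have PW: "P \<subseteq> W" "W \<in> T" "c \<in> sec W" using good_D[OF gP] by auto
  let ?J = "(\<lambda>i. Z \<inter> Pf i) ` I"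
  show "res V Z t = res W Z c"
  proof (rule sep[of Z ?J])
    show "Z \<in> T" by (rule Z(1))
    show "?J \<subseteq> T" using g T_int Z(1) good_D by blast
    show "finite ?J" using fin by simp
    show "\<Union>?J = Z" using cov Z by auto
    show "res V Z t \<in> sec Z" using res_in[of V Z t] V Z t by auto
    show "res W Z c \<in> sec Z" using res_in[of W Z c] PW Z by auto
    fix E assume "E \<in> ?J"
    then obtain i where i: "i \<in> I" "E = Z \<inter> Pf i" by blast
    have gi: "good s (Pf i) (Wf i) (cf i)" using g i by blast
    then have Pi: "Pf i \<in> T" "Wf i \<in> T" "Pf i \<subseteq> Wf i" "cf i \<in> sec (Wf i)"
      using good_D by auto
    have ET: "E \<in> T" using i Z Pi T_int by auto
    have VP: "V \<inter> Pf i \<in> T" using T_int V Pi by auto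
    have EV: "E \<subseteq> V \<inter> Pf i" "E \<subseteq> Z" using i Z by auto
    have "res Z E (res V Z t) = res V E t" using res_trans[of V Z E t] V Z ET EV t by auto
    also have "\<dots> = res (V \<inter> Pf i) E (res V (V \<inter> Pf i) t)"
      using res_trans[of V "V \<inter> Pf i" E t] V VP ET EV t by auto
    also have "\<dots> = res (V \<inter> Pf i) E (res (Wf i) (V \<inter> Pf i) (cf i))" using ag i by simp
    also have "\<dots> = res (Wf i) E (cf i)"
      using res_trans[of "Wf i" "V \<inter> Pf i" E "cf i"] Pi VP ET i Z by auto
    also have "\<dots> = res W E c" using agree[OF gi gP ET] i Z by auto
    also have "\<dots> = res Z E (res W Z c)" using res_trans[of W Z E c] PW Z ET i by auto
    finally show "res Z E (res V Z t) = res Z E (res W Z c)" .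
  qed
qed

lemma compat_uniq:
  assumes s: "s \<in> IS" and V: "V \<in> T" "relcomp X V U" and c1: "Compat s V t" and c2: "Compat s V t'"
  shows "t = t'"
proof -
  obtain R Wf cf where R: "finite R" "\<forall>P\<in>R. good s P (Wf P) (cf P)" "V \<subseteq> \<Union>R"
    using cover[OF s V(2)] by blast
  let ?J = "(\<lambda>P. V \<inter> P) ` R"
  show ?thesis
  proof (rule sep[of V ?J])
    show "V \<in> T" by (rule V(1))
    show "?J \<subseteq> T" using R(2) T_int V(1) good_D by blast
    show "finite ?J" using R(1) by simp
    show "\<Union>?J = V" using R(3) by auto
    show "t \<in> sec V" using c1 by (rule compat_sec)
    show "t' \<in> sec V" using c2 by (rule compat_sec)
    fix E assume "E \<in> ?J"
    then obtain P where P: "P \<in> R" "E = V \<inter> P" by blast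
    have g: "good s P (Wf P) (cf P)" using R(2) P by blast
    have ET: "E \<in> T" using T_int V good_D[OF g] P by auto
    have "res V E t = res (Wf P) E (cf P)" using compat_D[OF c1 g ET] P by simp
    moreover have "res V E t' = res (Wf P) E (cf P)" using compat_D[OF c2 g ET] P by simp
    ultimately show "res V E t = res V E t'" by simp
  qed
qed

lemma compat_ex:
  assumes s: "s \<in> IS" and V: "V \<in> T" "relcomp X V U"
  shows "\<exists>t. Compat s V t"
proof -
  obtain R Wf cf where R: "finite R" "\<forall>P\<in>R. good s P (Wf P) (cf P)" "V \<subseteq> \<Union>R"
    using cover[OF s V(2)] by blast
  let ?J = "(\<lambda>P. V \<inter> P) ` R"
  define ch where "ch D = (SOME P. P \<in> R \<and> D = V \<inter> P)" for D
  have ch: "ch D \<in> R \<and> D = V \<inter> ch D" if "D \<in> ?J" for D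
  proof -
    have "\<exists>P. P \<in> R \<and> D = V \<inter> P" using that by blast
    then show ?thesis unfolding ch_def by (rule someI_ex)
  qed
  define f where "f D = res (Wf (ch D)) D (cf (ch D))" for D
  have gch: "good s (ch D) (Wf (ch D)) (cf (ch D))" if "D \<in> ?J" for D
    using R(2) ch[OF that] by blast
  have DT: "D \<in> T" if "D \<in> ?J" for D using that T_int V R(2) good_D by blast
  have fsec: "f D \<in> sec D" if "D \<in> ?J" for D
  proof -
    note g = good_D[OF gch[OF that]]
    have "D \<subseteq> Wf (ch D)" using ch[OF that] g by blast
    then show ?thesis unfolding f_def using res_in g DT[OF that] by blast
  qed
  obtain t where t: "t \<in> sec V" "\<forall>D\<in>?J. res V D t = f D"
  proof -
    have "\<exists>t\<in>sec V. \<forall>D\<in>?J. res V D t = f D"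
    proof (rule glue)
      show "V \<in> T" by (rule V(1))
      show "?J \<subseteq> T" using DT by blast
      show "finite ?J" using R(1) by simp
      show "\<Union>?J = V" using R(3) by auto
      show "f D \<in> sec D" if "D \<in> ?J" for D using fsec that .
      fix D D' assume D: "D \<in> ?J" and D': "D' \<in> ?J"
      note g = good_D[OF gch[OF D]] and g' = good_D[OF gch[OF D']]
      have E: "D \<inter> D' \<in> T" using T_int DT D D' by blast
      have s1: "D \<subseteq> Wf (ch D)" using ch[OF D] g by blast
      have s2: "D' \<subseteq> Wf (ch D')" using ch[OF D'] g' by blast
      have "res D (D \<inter> D') (f D) = res (Wf (ch D)) (D \<inter> D') (cf (ch D))"
        unfolding f_def using res_trans[of "Wf (ch D)" D "D \<inter> D'"] g DT[OF D] E s1 by auto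
      also have "\<dots> = res (Wf (ch D')) (D \<inter> D') (cf (ch D'))"
        using agree[OF gch[OF D] gch[OF D'] E] ch[OF D] ch[OF D'] by blast
      also have "\<dots> = res D' (D \<inter> D') (f D')"
        unfolding f_def using res_trans[of "Wf (ch D')" D' "D \<inter> D'"] g' DT[OF D'] E s2 by auto
      finally show "res D (D \<inter> D') (f D) = res D' (D \<inter> D') (f D')" .
    qed
    then show ?thesis using that by blast
  qed
  have "Compat s V t"
  proof (rule compat_intro[where I=R and Pf="\<lambda>P. P" and Wf=Wf and cf=cf])
    show "V \<in> T" "finite R" "\<forall>i\<in>R. good s i (Wf i) (cf i)" "V \<subseteq> (\<Union>i\<in>R. i)" "t \<in> sec V"
      using V R t by auto
    show "\<forall>i\<in>R. res V (V \<inter> i) t = res (Wf i) (V \<inter> i) (cf i)"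
    proof
      fix P assume P: "P \<in> R"
      have D: "V \<inter> P \<in> ?J" using P by blast
      have "res V (V \<inter> P) t = f (V \<inter> P)" using t D by blast
      also have "\<dots> = res (Wf (ch (V \<inter> P))) (V \<inter> P) (cf (ch (V \<inter> P)))" unfolding f_def ..
      also have "\<dots> = res (Wf P) (V \<inter> P) (cf P)"
      proof -
        have "V \<inter> P \<subseteq> ch (V \<inter> P) \<inter> P" using ch[OF D] by blast
        then show ?thesis using agree[OF gch[OF D] _ DT[OF D], of P "Wf P" "cf P"] R(2) P by blast
      qed
      finally show "res V (V \<inter> P) t = res (Wf P) (V \<inter> P) (cf P)" .
    qed
  qed
  then show ?thesis by blast
qed

definition phi where
  "phi s V = (if V \<in> T \<and> relcomp X V U then (THE t. Compat s V t) else 0)"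

lemma phi_compat:
  assumes "s \<in> IS" "V \<in> T" "relcomp X V U" shows "Compat s V (phi s V)"
proof -
  have "\<exists>!t. Compat s V t" using compat_ex[OF assms] compat_uniq[OF assms] by blast
  then show ?thesis unfolding phi_def using assms(2,3) by (simp add: theI')
qed

lemma phi_eq:
  assumes "s \<in> IS" "V \<in> T" "relcomp X V U" "Compat s V t" shows "phi s V = t"
  using compat_uniq[OF assms(1,2,3) phi_compat[OF assms(1,2,3)] assms(4)] .

lemma phi_out: "\<not> (V \<in> T \<and> relcomp X V U) \<Longrightarrow> phi s V = 0"
  unfolding phi_def by (simp only: if_False)

end



context thm8 begin

lemma phi_in: assumes s: "s \<in> IS" shows "phi s \<in> proj_lim X T sec res U"
  unfolding proj_lim_def
proof (intro CollectI conjI allI impI)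
  fix V assume "V \<in> T \<and> relcomp X V U" then show "phi s V \<in> sec V"
    using phi_compat[OF s] compat_sec by blast
next
  fix V assume "\<not> (V \<in> T \<and> relcomp X V U)" then show "phi s V = 0" by (rule phi_out)
next
  fix V V' assume h: "V \<in> T \<and> relcomp X V U \<and> V' \<in> T \<and> relcomp X V' U \<and> V' \<subseteq> V"
  have cV: "Compat s V (phi s V)" using phi_compat[OF s] h by blast
  have "Compat s V' (res V V' (phi s V))"
    unfolding Compat_def
  proof (intro conjI allI impI ballI)
    show "res V V' (phi s V) \<in> sec V'" using res_in h compat_sec[OF cV] by blast
    fix P W c Z assume g: "good s P W c" and Z: "Z \<in> T" "Z \<subseteq> V' \<inter> P"
    have "res V' Z (res V V' (phi s V)) = res V Z (phi s V)"
      using res_trans[of V V' Z] h Z compat_sec[OF cV] by auto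
    also have "\<dots> = res W Z c" using compat_D[OF cV g Z(1)] Z h by auto
    finally show "res V' Z (res V V' (phi s V)) = res W Z c" .
  qed
  then show "res V V' (phi s V) = phi s V'" using phi_eq[OF s] h by metis
qed

lemma phi_inj: assumes s1: "s1 \<in> IS" and s2: "s2 \<in> IS" and eq: "phi s1 = phi s2" shows "s1 = s2"
proof
  fix x show "s1 x = s2 x"
  proof (cases "x \<in> U")
    case False then show ?thesis using s1 s2 unfolding inv_sections_def by simp
  next
    case True
    obtain P1 W1 a where g1: "good s1 P1 W1 a" "x \<in> P1" using good_ex[OF s1 True] by blast
    obtain P2 W2 b where g2: "good s2 P2 W2 b" "x \<in> P2" using good_ex[OF s2 True] by blast
    note d1 = good_D[OF g1(1)] and d2 = good_D[OF g2(1)]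
    let ?V = "P1 \<inter> P2"
    have VT: "?V \<in> T" using T_int d1 d2 by blast
    have "relcomp X ?V W1" using relcomp_sub[OF _ T_open[OF VT]] d1 by blast
    then have rcV: "relcomp X ?V U" using relcomp_mono d1 Uo by blast
    have c1: "Compat s1 ?V (phi s1 ?V)" using phi_compat[OF s1 VT rcV] .
    have c2: "Compat s2 ?V (phi s1 ?V)" using phi_compat[OF s2 VT rcV] eq by simp
    have e1: "phi s1 ?V = res W1 ?V a"
      using compat_D[OF c1 g1(1) VT] res_id[OF VT compat_sec[OF c1]] by auto
    have e2: "phi s1 ?V = res W2 ?V b"
      using compat_D[OF c2 g2(1) VT] res_id[OF VT compat_sec[OF c2]] by auto
    have "s1 x = gm x W1 a" using good_germ[OF g1(1)] d1 g1(2) by auto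
    also have "\<dots> = gm x ?V (res W1 ?V a)" using germ_res[of W1 ?V x a] d1 VT g1 g2 by auto
    also have "\<dots> = gm x ?V (res W2 ?V b)" using e1 e2 by simp
    also have "\<dots> = gm x W2 b" using germ_res[of W2 ?V x b] d2 VT g1 g2 by auto
    also have "\<dots> = s2 x" using good_germ[OF g2(1)] d2 g2(2) by auto
    finally show ?thesis .
  qed
qed

lemma phi_surj: assumes f: "f \<in> proj_lim X T sec res U" shows "\<exists>s\<in>IS. phi s = f"
proof -
  have fK: "f V \<in> sec V" if "V \<in> T" "relcomp X V U" for V
    using f that unfolding proj_lim_def by blast
  have f0: "f V = 0" if "\<not> (V \<in> T \<and> relcomp X V U)" for V
    using f that unfolding proj_lim_def by blast
  have fr: "res V V' (f V) = f V'"
    if "V \<in> T" "relcomp X V U" "V' \<in> T" "relcomp X V' U" "V' \<subseteq> V" for V V'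
    using f that unfolding proj_lim_def by blast
  have exK: "\<exists>V. V \<in> T \<and> relcomp X V U \<and> x \<in> V" if "x \<in> U" for x
  proof -
    obtain V0 where V0: "relcomp X V0 U" "x \<in> V0" using lwc1[OF Uo \<open>x \<in> U\<close>] by blast
    have "openin X V0" using V0(1) unfolding relcomp_def by simp
    then obtain V where V: "V \<in> T" "x \<in> V" "V \<subseteq> V0" using basis[of V0 x] V0(2) by blast
    have "relcomp X V U" using relcomp_sub[OF V0(1) T_open[OF V(1)] V(3)] .
    then show ?thesis using V by blast
  qed
  have indep: "gm x V1 (f V1) = gm x V2 (f V2)"
    if "V1 \<in> T" "relcomp X V1 U" "x \<in> V1" "V2 \<in> T" "relcomp X V2 U" "x \<in> V2" for x V1 V2
  proof -
    let ?V = "V1 \<inter> V2"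
    have VT: "?V \<in> T" using T_int that by blast
    have rc: "relcomp X ?V U" using relcomp_sub[OF that(2) T_open[OF VT]] by blast
    have "gm x V1 (f V1) = gm x ?V (res V1 ?V (f V1))"
      using germ_res[of V1 ?V x "f V1"] VT that fK by auto
    also have "\<dots> = gm x ?V (f ?V)" using fr[of V1 ?V] that VT rc by auto
    also have "\<dots> = gm x ?V (res V2 ?V (f V2))" using fr[of V2 ?V] that VT rc by auto
    also have "\<dots> = gm x V2 (f V2)" using germ_res[of V2 ?V x "f V2"] VT that fK by auto
    finally show ?thesis .
  qed
  define Vx where "Vx x = (SOME V. V \<in> T \<and> relcomp X V U \<and> x \<in> V)" for x
  have Vx: "Vx x \<in> T \<and> relcomp X (Vx x) U \<and> x \<in> Vx x" if "x \<in> U" for x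
    unfolding Vx_def using exK[OF that] by (rule someI_ex)
  define s where "s x = (if x \<in> U then gm x (Vx x) (f (Vx x)) else {})" for x
  have s_eq: "s x = gm x V (f V)" if "V \<in> T" "relcomp X V U" "x \<in> V" for x V
  proof -
    have xU: "x \<in> U" using that relcomp_subset by blast
    show ?thesis unfolding s_def using xU indep[of "Vx x" x V] Vx[OF xU] that by auto
  qed
  have sIS: "s \<in> IS"
  proof -
    have "\<exists>W\<in>T. \<exists>t\<in>sec W. x \<in> W \<and> W \<subseteq> U \<and> (\<forall>y\<in>W. s y = gm y W t)" if "x \<in> U" for x
    proof -
      have h: "Vx x \<in> T" "relcomp X (Vx x) U" "x \<in> Vx x" using Vx[OF that] by auto
      have "f (Vx x) \<in> sec (Vx x)" using fK h by blast
      moreover have "Vx x \<subseteq> U" using relcomp_subset h(2) .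
      moreover have "\<forall>y\<in>Vx x. s y = gm y (Vx x) (f (Vx x))" using s_eq h by blast
      ultimately show ?thesis using h by blast
    qed
    moreover have "\<forall>x. x \<notin> U \<longrightarrow> s x = {}" unfolding s_def by simp
    ultimately show ?thesis unfolding inv_sections_def by simp
  qed
  have "phi s V = f V" for V
  proof (cases "V \<in> T \<and> relcomp X V U")
    case False then show ?thesis using phi_out f0 by simp
  next
    case True
    then have VT: "V \<in> T" and rcV: "relcomp X V U" by auto
    have "Compat s V (f V)"
      unfolding Compat_def
    proof (intro conjI allI impI ballI)
      show "f V \<in> sec V" using fK VT rcV .
      fix P W c Z assume g: "good s P W c" and Z: "Z \<in> T" "Z \<subseteq> V \<inter> P"
      note d = good_D[OF g]
      obtain W0 where W0: "relcomp X W0 U" "relcomp X V W0" using lwc3[OF rcV] by blast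
      have rc2: "relcomp X (V \<inter> P) (W0 \<inter> W)" using lwc2[OF W0(2)] d by blast
      have ZK: "relcomp X Z U" using relcomp_sub[OF rcV T_open[OF Z(1)]] Z by blast
      define \<D> where "\<D> = {D. D \<in> T \<and> relcomp X D U \<and> D \<subseteq> W0 \<inter> W \<and> f D = res W D c}"
      have "\<Union>\<D> = W0 \<inter> W"
      proof
        show "\<Union>\<D> \<subseteq> W0 \<inter> W" by (auto simp: \<D>_def)
        show "W0 \<inter> W \<subseteq> \<Union>\<D>"
        proof
          fix y assume y: "y \<in> W0 \<inter> W"
          have oW0: "openin X (W0 \<inter> W)" using W0(1) T_open d unfolding relcomp_def by auto
          obtain Q where Q: "Q \<in> T" "y \<in> Q" "Q \<subseteq> W0 \<inter> W" using basis[OF oW0 y] by blast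
          have rcQ: "relcomp X Q U" using relcomp_sub[OF W0(1) T_open[OF Q(1)]] Q by blast
          have "gm y Q (f Q) = s y" using s_eq[OF Q(1) rcQ Q(2)] by simp
          also have "\<dots> = gm y W c" using good_germ[OF g] y by blast
          finally have "gm y Q (f Q) = gm y W c" .
          then obtain D where D: "D \<in> T" "y \<in> D" "D \<subseteq> Q \<inter> W" "res Q D (f Q) = res W D c"
            using germ_eq_D[of Q W y "f Q" c] Q y d fK[OF Q(1) rcQ] by auto
          have rcD: "relcomp X D U" using relcomp_sub[OF rcQ T_open[OF D(1)]] D by blast
          have "f D = res W D c" using fr[OF Q(1) rcQ D(1) rcD] D by auto
          then show "y \<in> \<Union>\<D>" unfolding \<D>_def using D Q rcD by blast
        qed
      qed
      moreover have "\<forall>D\<in>\<D>. openin X D" using T_open by (auto simp: \<D>_def)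
      moreover have rcf: "\<forall>\<U>. (\<forall>W\<in>\<U>. openin X W) \<and> \<Union>\<U> = W0 \<inter> W \<longrightarrow> (\<exists>\<J>\<subseteq>\<U>. finite \<J> \<and> V \<inter> P \<subseteq> \<Union>\<J>)"
        using rc2 unfolding relcomp_def by blast
      ultimately have "\<exists>\<J>\<subseteq>\<D>. finite \<J> \<and> V \<inter> P \<subseteq> \<Union>\<J>" by simp
      then obtain \<J> where J: "\<J> \<subseteq> \<D>" "finite \<J>" "V \<inter> P \<subseteq> \<Union>\<J>" by blast
      let ?J = "(\<lambda>D. Z \<inter> D) ` \<J>"
      have ZV: "Z \<subseteq> V" "Z \<subseteq> W" using Z d by auto
      show "res V Z (f V) = res W Z c"
      proof (rule sep[of Z ?J])
        show "Z \<in> T" by (rule Z(1))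
        show "?J \<subseteq> T" using J T_int Z(1) by (auto simp: \<D>_def)
        show "finite ?J" using J by simp
        show "\<Union>?J = Z" using J Z by auto
        show "res V Z (f V) \<in> sec Z" using res_in[of V Z "f V"] VT Z ZV fK[OF VT rcV] by auto
        show "res W Z c \<in> sec Z" using res_in[of W Z c] d Z ZV by auto
        fix E assume "E \<in> ?J"
        then obtain D where D: "D \<in> \<J>" "E = Z \<inter> D" by blast
        then have D2: "D \<in> T" "relcomp X D U" "D \<subseteq> W0 \<inter> W" "f D = res W D c"
          using J by (auto simp: \<D>_def)
        have ET: "E \<in> T" using D D2 T_int Z by auto
        have EZ: "E \<subseteq> Z" "E \<subseteq> D" using D by auto
        have rcE: "relcomp X E U" using relcomp_sub[OF ZK T_open[OF ET] EZ(1)] .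
        have "res Z E (res V Z (f V)) = res V E (f V)"
          using res_trans[of V Z E "f V"] VT Z ZV ET EZ fK[OF VT rcV] by auto
        also have "\<dots> = f E" using fr[OF VT rcV ET rcE] EZ ZV by auto
        also have "\<dots> = res D E (f D)" using fr[OF D2(1,2) ET rcE] EZ by auto
        also have "\<dots> = res D E (res W D c)" using D2 by simp
        also have "\<dots> = res W E c" using res_trans[of W D E c] d D2 ET EZ by auto
        also have "\<dots> = res Z E (res W Z c)" using res_trans[of W Z E c] d Z ZV ET EZ by auto
        finally show "res Z E (res V Z (f V)) = res Z E (res W Z c)" .
      qed
    qed
    then show ?thesis using phi_eq[OF sIS VT rcV] by simp
  qed
  then show ?thesis using sIS by blast
qed

end



context thm8 begin

lemma res_common:
  assumes "W \<in> T" "W' \<in> T" "D1 \<in> T" "D \<in> T" "D \<subseteq> D1" "D1 \<subseteq> W \<inter> W'" "a \<in> sec W" "t \<in> sec W'"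
    "res W D1 a = res W' D1 t"
  shows "res W D a = res W' D t"
proof -
  have "res W D a = res D1 D (res W D1 a)" using res_trans[of W D1 D a] assms by auto
  also have "\<dots> = res D1 D (res W' D1 t)" using assms by simp
  also have "\<dots> = res W' D t" using res_trans[of W' D1 D t] assms by auto
  finally show ?thesis .
qed

lemma germ_add_eq:
  assumes a: "W \<in> T" "y \<in> W" "a \<in> sec W" "b \<in> sec W"
  shows "germ_add T sec res y (gm y W a) (gm y W b) = gm y W (a + b)"
proof -
  let ?P = "\<lambda>g. \<exists>W' t1 t2. W' \<in> T \<and> y \<in> W' \<and> t1 \<in> sec W' \<and> t2 \<in> sec W' \<and>
      gm y W a = gm y W' t1 \<and> gm y W b = gm y W' t2 \<and> g = gm y W' (t1 + t2)"
  have ex: "\<exists>g. ?P g"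
  proof (intro exI conjI)
    show "W \<in> T" "y \<in> W" "a \<in> sec W" "b \<in> sec W" using a by auto
  qed (rule refl)+
  define g0 where "g0 = (SOME g. ?P g)"
  have "?P g0" unfolding g0_def using someI_ex[OF ex] .
  then obtain W' t1 t2 where h: "W' \<in> T" "y \<in> W'" "t1 \<in> sec W'" "t2 \<in> sec W'"
    "gm y W a = gm y W' t1" "gm y W b = gm y W' t2" "g0 = gm y W' (t1 + t2)"
    by (elim exE conjE) (rule that)
  obtain D1 where D1: "D1 \<in> T" "y \<in> D1" "D1 \<subseteq> W \<inter> W'" "res W D1 a = res W' D1 t1"
    using germ_eq_D[of W W' y a t1] a h by auto
  obtain D2 where D2: "D2 \<in> T" "y \<in> D2" "D2 \<subseteq> W \<inter> W'" "res W D2 b = res W' D2 t2"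
    using germ_eq_D[of W W' y b t2] a h by auto
  let ?D = "D1 \<inter> D2"
  have DT: "?D \<in> T" using T_int D1 D2 by blast
  have r1: "res W ?D a = res W' ?D t1" using res_common[of W W' D1 ?D a t1] a h D1 DT by auto
  have r2: "res W ?D b = res W' ?D t2" using res_common[of W W' D2 ?D b t2] a h D2 DT by auto
  have "gm y W (a+b) = gm y W' (t1+t2)"
  proof (rule germ_eq_I[of W W' ?D])
    show "res W ?D (a + b) = res W' ?D (t1 + t2)"
    proof -
      have DW: "?D \<subseteq> W" "?D \<subseteq> W'" using D1 D2 by auto
      show ?thesis using res_add[OF a(1) DT DW(1) a(3) a(4)] res_add[OF h(1) DT DW(2) h(3) h(4)] r1 r2 by simp
    qed
  next
    show "W \<in> T" "W' \<in> T" "?D \<in> T" "y \<in> ?D" "?D \<subseteq> W \<inter> W'" using a h DT D1 D2 by auto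
    show "a + b \<in> sec W" using sec_add a by blast
    show "t1 + t2 \<in> sec W'" using sec_add h by blast
  qed
  then show ?thesis using h(7) unfolding germ_add_def g0_def by simp
qed

lemma germ_scale_eq:
  assumes a: "W \<in> T" "y \<in> W" "a \<in> sec W"
  shows "germ_scale T sc sec res y k (gm y W a) = gm y W (sc k a)"
proof -
  let ?P = "\<lambda>g. \<exists>W' t. W' \<in> T \<and> y \<in> W' \<and> t \<in> sec W' \<and>
      gm y W a = gm y W' t \<and> g = gm y W' (sc k t)"
  have ex: "\<exists>g. ?P g"
  proof (intro exI conjI)
    show "W \<in> T" "y \<in> W" "a \<in> sec W" using a by auto
  qed (rule refl)+
  define g0 where "g0 = (SOME g. ?P g)"
  have "?P g0" unfolding g0_def using someI_ex[OF ex] .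
  then obtain W' t where h: "W' \<in> T" "y \<in> W'" "t \<in> sec W'"
    "gm y W a = gm y W' t" "g0 = gm y W' (sc k t)"
    by (elim exE conjE) (rule that)
  obtain D1 where D1: "D1 \<in> T" "y \<in> D1" "D1 \<subseteq> W \<inter> W'" "res W D1 a = res W' D1 t"
    using germ_eq_D[of W W' y a t] a h by auto
  have "gm y W (sc k a) = gm y W' (sc k t)"
  proof (rule germ_eq_I[of W W' D1])
    show "res W D1 (sc k a) = res W' D1 (sc k t)"
      using res_sc[of W D1 a k] res_sc[of W' D1 t k] a h D1 by auto
  next
    show "W \<in> T" "W' \<in> T" "D1 \<in> T" "y \<in> D1" "D1 \<subseteq> W \<inter> W'" using a h D1 by auto
    show "sc k a \<in> sec W" using sec_sc a by blast
    show "sc k t \<in> sec W'" using sec_sc h by blast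
  qed
  then show ?thesis using h(5) unfolding germ_scale_def g0_def by simp
qed

abbreviation "iadd \<equiv> inv_add T sec res U"
abbreviation "iscale \<equiv> inv_scale T sc sec res U"

lemma good_sum:
  assumes g1: "good s1 P1 W1 a" and g2: "good s2 P2 W2 b"
  shows "good (iadd s1 s2) (P1 \<inter> P2) (W1 \<inter> W2) (res W1 (W1 \<inter> W2) a + res W2 (W1 \<inter> W2) b)"
proof -
  note d1 = good_D[OF g1] and d2 = good_D[OF g2]
  let ?W = "W1 \<inter> W2"
  have WT: "?W \<in> T" using T_int d1 d2 by blast
  have ra: "res W1 ?W a \<in> sec ?W" using res_in d1 WT by blast
  have rb: "res W2 ?W b \<in> sec ?W" using res_in d2 WT by blast
  have rc: "relcomp X (P1 \<inter> P2) ?W" using lwc2 d1 d2 by blast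
  have gg: "\<forall>y\<in>?W. iadd s1 s2 y = gm y ?W (res W1 ?W a + res W2 ?W b)"
  proof
    fix y assume y: "y \<in> ?W"
    have yU: "y \<in> U" using y d1 by blast
    have e1: "s1 y = gm y ?W (res W1 ?W a)"
      using good_germ[OF g1, of y] germ_res[of W1 ?W y a] d1 WT y by auto
    have e2: "s2 y = gm y ?W (res W2 ?W b)"
      using good_germ[OF g2, of y] germ_res[of W2 ?W y b] d2 WT y by auto
    show "iadd s1 s2 y = gm y ?W (res W1 ?W a + res W2 ?W b)"
      unfolding inv_add_def using yU e1 e2 germ_add_eq[OF WT y ra rb] by simp
  qed
  have "P1 \<inter> P2 \<in> T" using T_int d1 d2 by blast
  moreover have "?W \<subseteq> U" using d1 by blast
  moreover have "res W1 ?W a + res W2 ?W b \<in> sec ?W" using sec_add[OF WT ra rb] .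
  ultimately show ?thesis unfolding good_def using WT rc gg by blast
qed

lemma good_scale:
  assumes g1: "good s1 P1 W1 a"
  shows "good (iscale k s1) P1 W1 (sc k a)"
proof -
  note d1 = good_D[OF g1]
  have gg: "\<forall>y\<in>W1. iscale k s1 y = gm y W1 (sc k a)"
  proof
    fix y assume y: "y \<in> W1"
    have yU: "y \<in> U" using y d1 by blast
    have e1: "s1 y = gm y W1 a" using good_germ[OF g1 y] .
    show "iscale k s1 y = gm y W1 (sc k a)"
      unfolding inv_scale_def using yU e1 germ_scale_eq[of W1 y a k] d1 y by simp
  qed
  have "sc k a \<in> sec W1" using sec_sc d1 by blast
  then show ?thesis unfolding good_def using d1 gg by blast
qed

lemma add_IS: assumes s1: "s1 \<in> IS" and s2: "s2 \<in> IS" shows "iadd s1 s2 \<in> IS"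
proof (rule good_IS)
  show "\<forall>x. x \<notin> U \<longrightarrow> iadd s1 s2 x = {}" unfolding inv_add_def by simp
  show "\<forall>x\<in>U. \<exists>P W c. good (iadd s1 s2) P W c \<and> x \<in> P"
  proof
    fix x assume x: "x \<in> U"
    obtain P1 W1 a where g1: "good s1 P1 W1 a" "x \<in> P1" using good_ex[OF s1 x] by blast
    obtain P2 W2 b where g2: "good s2 P2 W2 b" "x \<in> P2" using good_ex[OF s2 x] by blast
    show "\<exists>P W c. good (iadd s1 s2) P W c \<and> x \<in> P"
      using good_sum[OF g1(1) g2(1)] g1(2) g2(2) by blast
  qed
qed

lemma scale_IS: assumes s1: "s1 \<in> IS" shows "iscale k s1 \<in> IS"
proof (rule good_IS)
  show "\<forall>x. x \<notin> U \<longrightarrow> iscale k s1 x = {}" unfolding inv_scale_def by simp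
  show "\<forall>x\<in>U. \<exists>P W c. good (iscale k s1) P W c \<and> x \<in> P"
  proof
    fix x assume x: "x \<in> U"
    obtain P1 W1 a where g1: "good s1 P1 W1 a" "x \<in> P1" using good_ex[OF s1 x] by blast
    show "\<exists>P W c. good (iscale k s1) P W c \<and> x \<in> P"
      using good_scale[OF g1(1)] g1(2) by blast
  qed
qed

lemma phi_add:
  assumes s1: "s1 \<in> IS" and s2: "s2 \<in> IS"
  shows "phi (iadd s1 s2) = (\<lambda>V. phi s1 V + phi s2 V)"
proof
  fix V show "phi (iadd s1 s2) V = phi s1 V + phi s2 V"
  proof (cases "V \<in> T \<and> relcomp X V U")
    case False then show ?thesis using phi_out[OF False] by simp
  next
    case True
    then have VT: "V \<in> T" and rcV: "relcomp X V U" by auto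
    obtain R1 Wf1 cf1 where R1: "finite R1" "\<forall>P\<in>R1. good s1 P (Wf1 P) (cf1 P)" "V \<subseteq> \<Union>R1"
      using cover[OF s1 rcV] by blast
    obtain R2 Wf2 cf2 where R2: "finite R2" "\<forall>P\<in>R2. good s2 P (Wf2 P) (cf2 P)" "V \<subseteq> \<Union>R2"
      using cover[OF s2 rcV] by blast
    have c1: "Compat s1 V (phi s1 V)" using phi_compat[OF s1 VT rcV] .
    have c2: "Compat s2 V (phi s2 V)" using phi_compat[OF s2 VT rcV] .
    define Wf where "Wf i = Wf1 (fst i) \<inter> Wf2 (snd i)" for i :: "'a set \<times> 'a set"
    define cf where "cf i = res (Wf1 (fst i)) (Wf i) (cf1 (fst i)) + res (Wf2 (snd i)) (Wf i) (cf2 (snd i))"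
      for i :: "'a set \<times> 'a set"
    have "Compat (iadd s1 s2) V (phi s1 V + phi s2 V)"
    proof (rule compat_intro[where I="R1 \<times> R2" and Pf="\<lambda>i. fst i \<inter> snd i" and Wf=Wf and cf=cf])
      show "V \<in> T" by (rule VT)
      show "finite (R1 \<times> R2)" using R1 R2 by simp
      show "\<forall>i\<in>R1 \<times> R2. good (iadd s1 s2) (fst i \<inter> snd i) (Wf i) (cf i)"
      proof
        fix i assume i: "i \<in> R1 \<times> R2"
        then have "good s1 (fst i) (Wf1 (fst i)) (cf1 (fst i))" "good s2 (snd i) (Wf2 (snd i)) (cf2 (snd i))"
          using R1(2) R2(2) by auto
        from good_sum[OF this] show "good (iadd s1 s2) (fst i \<inter> snd i) (Wf i) (cf i)"
          unfolding Wf_def cf_def .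
      qed
      show "V \<subseteq> (\<Union>i\<in>R1 \<times> R2. fst i \<inter> snd i)"
      proof
        fix v assume v: "v \<in> V"
        obtain P1 where "P1 \<in> R1" "v \<in> P1" using R1(3) v by blast
        moreover obtain P2 where "P2 \<in> R2" "v \<in> P2" using R2(3) v by blast
        ultimately have "(P1, P2) \<in> R1 \<times> R2" "v \<in> fst (P1, P2) \<inter> snd (P1, P2)" by auto
        then show "v \<in> (\<Union>i\<in>R1 \<times> R2. fst i \<inter> snd i)" by (rule UN_I)
      qed
      show "phi s1 V + phi s2 V \<in> sec V" using sec_add[OF VT compat_sec[OF c1] compat_sec[OF c2]] .
      show "\<forall>i\<in>R1 \<times> R2. res V (V \<inter> (fst i \<inter> snd i)) (phi s1 V + phi s2 V) =
               res (Wf i) (V \<inter> (fst i \<inter> snd i)) (cf i)"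
      proof
        fix i assume i: "i \<in> R1 \<times> R2"
        obtain P1 P2 where i0: "i = (P1, P2)" by (cases i)
        then have i': "i = (P1, P2)" "P1 \<in> R1" "P2 \<in> R2" using i by auto
        have g1: "good s1 P1 (Wf1 P1) (cf1 P1)" using R1(2) i' by blast
        have g2: "good s2 P2 (Wf2 P2) (cf2 P2)" using R2(2) i' by blast
        note d1 = good_D[OF g1] and d2 = good_D[OF g2]
        let ?W = "Wf1 P1 \<inter> Wf2 P2" and ?Z = "V \<inter> (P1 \<inter> P2)"
        have p1: "P1 \<in> T" "Wf1 P1 \<in> T" "P1 \<subseteq> Wf1 P1" "cf1 P1 \<in> sec (Wf1 P1)"
          using d1 by (simp_all only: )
        have p2: "P2 \<in> T" "Wf2 P2 \<in> T" "P2 \<subseteq> Wf2 P2" "cf2 P2 \<in> sec (Wf2 P2)"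
          using d2 by (simp_all only: )
        have WT: "?W \<in> T" using T_int[OF p1(2) p2(2)] .
        have ZT: "?Z \<in> T" using T_int[OF VT T_int[OF p1(1) p2(1)]] .
        have ZW: "?Z \<subseteq> ?W" using p1(3) p2(3) by blast
        have t1: "phi s1 V \<in> sec V" using compat_sec[OF c1] .
        have t2: "phi s2 V \<in> sec V" using compat_sec[OF c2] .
        have W1: "?W \<subseteq> Wf1 P1" "?W \<subseteq> Wf2 P2" by auto
        have ra: "res (Wf1 P1) ?W (cf1 P1) \<in> sec ?W" using res_in[OF p1(2) WT W1(1) p1(4)] .
        have rb: "res (Wf2 P2) ?W (cf2 P2) \<in> sec ?W" using res_in[OF p2(2) WT W1(2) p2(4)] .
        have ZV: "?Z \<subseteq> V" "?Z \<subseteq> V \<inter> P1" "?Z \<subseteq> V \<inter> P2" by auto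
        have "res V ?Z (phi s1 V + phi s2 V) = res V ?Z (phi s1 V) + res V ?Z (phi s2 V)"
          using res_add[OF VT ZT ZV(1) t1 t2] .
        also have "\<dots> = res (Wf1 P1) ?Z (cf1 P1) + res (Wf2 P2) ?Z (cf2 P2)"
          using compat_D[OF c1 g1 ZT ZV(2)] compat_D[OF c2 g2 ZT ZV(3)] by simp
        also have "\<dots> = res ?W ?Z (res (Wf1 P1) ?W (cf1 P1)) + res ?W ?Z (res (Wf2 P2) ?W (cf2 P2))"
        proof -
          show ?thesis using res_trans[OF p1(2) WT ZT ZW W1(1) p1(4)] res_trans[OF p2(2) WT ZT ZW W1(2) p2(4)]
            by simp
        qed
        also have "\<dots> = res ?W ?Z (res (Wf1 P1) ?W (cf1 P1) + res (Wf2 P2) ?W (cf2 P2))"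
          using res_add[OF WT ZT ZW ra rb] by simp
        finally show "res V (V \<inter> (fst i \<inter> snd i)) (phi s1 V + phi s2 V) =
               res (Wf i) (V \<inter> (fst i \<inter> snd i)) (cf i)"
          unfolding Wf_def cf_def using i' by simp
      qed
    qed
    then show ?thesis using phi_eq[OF add_IS[OF s1 s2] VT rcV] by simp
  qed
qed

lemma phi_scale:
  assumes s1: "s1 \<in> IS"
  shows "phi (iscale k s1) = (\<lambda>V. sc k (phi s1 V))"
proof
  fix V show "phi (iscale k s1) V = sc k (phi s1 V)"
  proof (cases "V \<in> T \<and> relcomp X V U")
    case False
    have eT: "{} \<in> T" using tsp unfolding tspace_def by simp
    have "sc k 0 = 0"
      by (rule sep[of "{}" "{}"]) (use eT sec_zero[OF eT] sec_sc[OF eT sec_zero[OF eT]] in auto)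
    then show ?thesis using phi_out[OF False] by simp
  next
    case True
    then have VT: "V \<in> T" and rcV: "relcomp X V U" by auto
    obtain R1 Wf1 cf1 where R1: "finite R1" "\<forall>P\<in>R1. good s1 P (Wf1 P) (cf1 P)" "V \<subseteq> \<Union>R1"
      using cover[OF s1 rcV] by blast
    have c1: "Compat s1 V (phi s1 V)" using phi_compat[OF s1 VT rcV] .
    have "Compat (iscale k s1) V (sc k (phi s1 V))"
    proof (rule compat_intro[where I="R1" and Pf="\<lambda>i. i" and Wf=Wf1 and cf="\<lambda>i. sc k (cf1 i)"])
      show "V \<in> T" by (rule VT)
      show "finite R1" using R1 by simp
      show "\<forall>i\<in>R1. good (iscale k s1) i (Wf1 i) (sc k (cf1 i))"
        using good_scale R1(2) by blast
      show "V \<subseteq> (\<Union>i\<in>R1. i)" using R1(3) by auto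
      show "sc k (phi s1 V) \<in> sec V" using sec_sc[OF VT compat_sec[OF c1]] .
      show "\<forall>i\<in>R1. res V (V \<inter> i) (sc k (phi s1 V)) = res (Wf1 i) (V \<inter> i) (sc k (cf1 i))"
      proof
        fix P1 assume i': "P1 \<in> R1"
        have g1: "good s1 P1 (Wf1 P1) (cf1 P1)" using R1(2) i' by blast
        note d1 = good_D[OF g1]
        let ?Z = "V \<inter> P1"
        have p1: "P1 \<in> T" "Wf1 P1 \<in> T" "P1 \<subseteq> Wf1 P1" "cf1 P1 \<in> sec (Wf1 P1)"
          using d1 by (simp_all only: )
        have ZT: "?Z \<in> T" using T_int[OF VT p1(1)] .
        have t1: "phi s1 V \<in> sec V" using compat_sec[OF c1] .
        have ZV: "?Z \<subseteq> V" "?Z \<subseteq> V \<inter> P1" "?Z \<subseteq> Wf1 P1" using p1(3) by auto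
        have "res V ?Z (sc k (phi s1 V)) = sc k (res V ?Z (phi s1 V))"
          using res_sc[OF VT ZT ZV(1) t1] .
        also have "\<dots> = sc k (res (Wf1 P1) ?Z (cf1 P1))"
          using compat_D[OF c1 g1 ZT ZV(2)] by simp
        also have "\<dots> = res (Wf1 P1) ?Z (sc k (cf1 P1))"
          using res_sc[OF p1(2) ZT ZV(3) p1(4)] by simp
        finally show "res V ?Z (sc k (phi s1 V)) = res (Wf1 P1) ?Z (sc k (cf1 P1))" .
      qed
    qed
    then show ?thesis using phi_eq[OF scale_IS[OF s1] VT rcV] by simp
  qed
qed

end


theorem mainTheorem8:
  fixes X :: "'a topology" and T :: "'a set set"
    and sc :: "'k::field \<Rightarrow> 'v::ab_group_add \<Rightarrow> 'v"
    and sec :: "'a set \<Rightarrow> 'v set" and res :: "'a set \<Rightarrow> 'a set \<Rightarrow> 'v \<Rightarrow> 'v"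
    and U :: "'a set"
  assumes "vector_space sc"
    and "tspace X T"
    and "loc_weakly_qc X"
    and "tsheaf T sc sec res"
    and "openin X U"
  shows "\<exists>\<phi>. bij_betw \<phi> (inv_sections T sec res U) (proj_lim X T sec res U) \<and>
           (\<forall>s1\<in>inv_sections T sec res U. \<forall>s2\<in>inv_sections T sec res U.
              \<phi> (inv_add T sec res U s1 s2) = (\<lambda>V. \<phi> s1 V + \<phi> s2 V)) \<and>
           (\<forall>c. \<forall>s\<in>inv_sections T sec res U.
              \<phi> (inv_scale T sc sec res U c s) = (\<lambda>V. sc c (\<phi> s V)))"
proof -
  interpret thm8 X T sc sec res U using assms(2-5) by unfold_locales
  have bij: "bij_betw phi IS (proj_lim X T sec res U)"
    unfolding bij_betw_def
  proof
    show "inj_on phi IS" using phi_inj unfolding inj_on_def by blast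
    show "phi ` IS = proj_lim X T sec res U" using phi_in phi_surj by blast
  qed
  show ?thesis
  proof (intro exI[of _ phi] conjI ballI allI)
    show "bij_betw phi IS (proj_lim X T sec res U)" by (rule bij)
    show "phi (iadd s1 s2) = (\<lambda>V. phi s1 V + phi s2 V)" if "s1 \<in> IS" "s2 \<in> IS" for s1 s2
      using phi_add[OF that] .
    show "phi (iscale c s) = (\<lambda>V. sc c (phi s V))" if "s \<in> IS" for c s
      using phi_scale[OF that] .
  qed
qed

end
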